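(* Let $(U,\mathrm{dist})$ be a metric space, $\gamma>0$, $\eta>0$, $\Lambda\in\mathbb{R}_{>0}\cup\{\infty\}$, $p>1$, $\theta\ge1$, $m\ge1$. Let $f:U\to\mathbb{R}^m$, where $\mathbb{R}^m$ is equipped with the $\ell_1$ metric, and let $B(\cdot)$ be a $g_E$-smooth upper bound on $\mathrm{L}_{f,\Lambda}$, where $g_E(x,x')=e^{\gamma\,\mathrm{dist}(x,x')}$. Then the mechanism $M$ which on input $x$ releases $M(x)=f(x)+\frac{B(x)}{\eta}Z$, where $Z=(Z_1,\dots,Z_m)$ with $Z_j$ i.i.d. $\mathrm{GenCauchy}(0,1,p,\theta)$, is $(\varepsilon,0,\Lambda)$-GP, where $\varepsilon=\max(m\gamma,m(p\theta-1)\gamma)+(p-1)^{\frac{p-1}{p}}\theta\eta$.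
   Context: $\mathrm{L}_{f,\Lambda}(x)$ is the infimum of all $K$ such that $\|f(x)-f(x')\|_1\le K\,\mathrm{dist}(x,x')$ for all $x'\in U$ with $\mathrm{dist}(x,x')\le\Lambda$. A $g$-smooth upper bound on $\mathrm{L}_{f,\Lambda}$ is $B:U\to\mathbb{R}_{\ge0}$ with (1) $B(x)\ge\mathrm{L}_{f,\Lambda}(x)$ for all $x$ and (2) $B(x)\le g(x,x')B(x')$ for all $x,x'\in U$. $\mathrm{GenCauchy}(0,1,p,\theta)$ is the distribution on $\mathbb{R}$ with density $c_{p,\theta}(1+|y|^p)^{-\theta}$, $c_{p,\theta}=\frac{p\Gamma(\theta)}{2\Gamma(1/p)\Gamma(\theta-1/p)}$. A mechanism $M$ with outputs in $\mathbb{R}^m$ is $(\varepsilon,\delta,\Lambda)$-GP if for every measurable $S\subseteq\mathbb{R}^m$ and all $x,x'$ with $\mathrm{dist}(x,x')\le\Lambda$: $\Pr[M(x)\in S]\le e^{\varepsilon\,\mathrm{dist}(x,x')}\Pr[M(x')\in S]+\delta$. *)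

theory Defs
  imports "HOL-Probability.Probability"
begin

text \<open>The l1 norm on R^m (vectors indexed by a finite type, m = CARD('n)).\<close>
definition l1_norm :: "real ^ 'n \<Rightarrow> real" where
  "l1_norm v = (\<Sum>i\<in>UNIV. \<bar>v $ i\<bar>)"

definition local_lip :: "('a::metric_space \<Rightarrow> real ^ 'n) \<Rightarrow> ereal \<Rightarrow> 'a \<Rightarrow> ereal" where
  "local_lip f \<Lambda> x = Inf {ereal K | K. \<forall>x'. ereal (dist x x') \<le> \<Lambda> \<longrightarrow>
        l1_norm (f x - f x') \<le> K * dist x x'}"

definition smooth_upper_bound ::
  "('a \<Rightarrow> 'a \<Rightarrow> real) \<Rightarrow> ('a::metric_space \<Rightarrow> real ^ 'n) \<Rightarrow> ereal \<Rightarrow> ('a \<Rightarrow> real) \<Rightarrow> bool" where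
  "smooth_upper_bound g f \<Lambda> B \<longleftrightarrow>
     (\<forall>x. 0 \<le> B x) \<and>
     (\<forall>x. local_lip f \<Lambda> x \<le> ereal (B x)) \<and>
     (\<forall>x x'. B x \<le> g x x' * B x')"

definition gc_const :: "real \<Rightarrow> real \<Rightarrow> real" where
  "gc_const p \<theta> = p * Gamma \<theta> / (2 * Gamma (1 / p) * Gamma (\<theta> - 1 / p))"

definition gc_density :: "real \<Rightarrow> real \<Rightarrow> real \<Rightarrow> real" where
  "gc_density p \<theta> y = gc_const p \<theta> * (1 + \<bar>y\<bar> powr p) powr (- \<theta>)"

definition gc_vector :: "real \<Rightarrow> real \<Rightarrow> (real ^ 'n) measure" where
  "gc_vector p \<theta> = density lborel (\<lambda>z. ennreal (\<Prod>j\<in>UNIV. gc_density p \<theta> (z $ j)))"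

definition gc_mechanism ::
  "('a \<Rightarrow> real ^ 'n) \<Rightarrow> ('a \<Rightarrow> real) \<Rightarrow> real \<Rightarrow> real \<Rightarrow> real \<Rightarrow> 'a \<Rightarrow> (real ^ 'n) measure" where
  "gc_mechanism f B \<eta> p \<theta> x =
     distr (gc_vector p \<theta>) borel (\<lambda>z. f x + (B x / \<eta>) *\<^sub>R z)"

definition GP :: "real \<Rightarrow> real \<Rightarrow> ereal \<Rightarrow> ('a::metric_space \<Rightarrow> (real ^ 'n) measure) \<Rightarrow> bool" where
  "GP \<epsilon> \<delta> \<Lambda> M \<longleftrightarrow>
     (\<forall>S \<in> sets (borel :: (real ^ 'n) measure). \<forall>x x'. ereal (dist x x') \<le> \<Lambda> \<longrightarrow>
        measure (M x) S \<le> exp (\<epsilon> * dist x x') * measure (M x') S + \<delta>)"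

end

theory Submission
  imports Defs
begin

lemma young_bound:
  fixes p r :: real
  assumes p: "p > 1" and r: "r > 0"
  shows "p * r powr (p - 1) \<le> (p - 1) powr ((p - 1) / p) * (1 + r powr p)"
proof -
  define L where "L = (p - 1) powr ((p - 1) / p)"
  have p1: "p - 1 > 0" using p by simp
  have Lpos: "L > 0" using p1 unfolding L_def by simp
  define a where "a = L / (p - 1) * r powr p"
  have apos: "a > 0" using Lpos p1 r unfolding a_def by simp
  have h1: "0 \<le> (p-1)/p" using p by simp
  have h2: "0 \<le> 1/p" using p by simp
  have h3: "(p-1)/p + 1/p = 1" using p by (simp add: add_divide_distrib[symmetric])
  have Y: "a powr ((p-1)/p) * L powr (1/p) \<le> ((p-1)/p) * a + (1/p) * L"
    by (rule Youngs_inequality_0[OF h1 h2 h3 apos Lpos])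
  have e1: "a powr ((p-1)/p) = (L / (p-1)) powr ((p-1)/p) * (r powr p) powr ((p-1)/p)"
    unfolding a_def by (rule powr_mult)
  have e2: "(r powr p) powr ((p-1)/p) = r powr (p - 1)"
    unfolding powr_powr using p by simp
  have e3: "(L / (p-1)) powr ((p-1)/p) = L powr ((p-1)/p) / L"
    by (simp only: powr_divide L_def)
  have e4: "L powr ((p-1)/p) * L powr (1/p) = L"
    unfolding powr_add[symmetric] h3 using Lpos by simp
  have lhs: "a powr ((p-1)/p) * L powr (1/p) = r powr (p-1)"
    unfolding e1 e2 e3 using e4 Lpos by (simp add: field_simps)
  have rhs: "((p-1)/p) * a + (1/p) * L = L * (1 + r powr p) / p"
    using p1 p unfolding a_def by (simp add: field_simps)
  from Y have "r powr (p-1) \<le> L * (1 + r powr p) / p" unfolding lhs rhs .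
  then have "r powr (p-1) * p \<le> L * (1 + r powr p)" using p by (simp add: pos_le_divide_eq)
  then show ?thesis unfolding L_def by (simp add: mult.commute)
qed

lemma core_growth:
  fixes p r t :: real
  assumes p: "p > 1" and r: "r \<ge> 0" and t: "t \<ge> 0"
  shows "1 + (r + t) powr p \<le> exp ((p - 1) powr ((p - 1) / p) * t) * (1 + r powr p)"
proof -
  define L where "L = (p - 1) powr ((p - 1) / p)"
  define \<psi> where "\<psi> x = ln (1 + x powr p) - L * x" for x :: real
  have cont: "continuous_on {r..r+t} \<psi>"
  proof -
    have c1: "continuous_on {r..r+t} (\<lambda>x. x powr p)"
      by (rule continuous_on_powr') (use r p in \<open>auto intro: continuous_intros\<close>)
    have "\<forall>x. 1 + x powr p > 0" by (simp add: add_pos_nonneg)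
    then show ?thesis unfolding \<psi>_def
      by (intro continuous_intros c1) (auto simp: less_le)
  qed
  have der: "\<exists>y. (\<psi> has_real_derivative y) (at x) \<and> y \<le> 0" if x: "r < x" "x < r + t" for x
  proof -
    have xpos: "x > 0" using r x by simp
    have pos: "0 < 1 + x powr p" by (simp add: add_pos_nonneg)
    have D1: "((\<lambda>x. x powr p) has_real_derivative p * x powr (p - 1)) (at x)"
      by (rule has_real_derivative_powr[OF xpos])
    have D2: "((\<lambda>z. 1 + z powr p) has_real_derivative 0 + p * x powr (p - 1)) (at x)"
      by (intro derivative_intros D1)
    have D3: "((\<lambda>z. ln (1 + z powr p)) has_real_derivative 1 / (1 + x powr p) * (0 + p * x powr (p - 1))) (at x)"
      by (rule DERIV_chain2[OF DERIV_ln_divide[OF pos] D2])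
    have D4: "((\<lambda>z. L * z) has_real_derivative L * 1) (at x)"
      by (rule DERIV_cmult[OF DERIV_ident])
    have D: "(\<psi> has_real_derivative 1 / (1 + x powr p) * (0 + p * x powr (p - 1)) - L * 1) (at x)"
      unfolding \<psi>_def by (rule DERIV_diff[OF D3 D4])
    have "p * x powr (p - 1) \<le> L * (1 + x powr p)"
      using young_bound[OF p xpos] unfolding L_def .
    then have "p * x powr (p - 1) / (1 + x powr p) \<le> L"
      using pos by (simp add: divide_le_eq)
    then have "1 / (1 + x powr p) * (0 + p * x powr (p - 1)) - L * 1 \<le> 0" by simp
    with D show ?thesis by blast
  qed
  have "\<psi> (r + t) \<le> \<psi> r"
    by (rule DERIV_nonpos_imp_decreasing_open[of r "r+t" \<psi>]) (use t cont der in auto)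
  then have "ln (1 + (r+t) powr p) \<le> ln (1 + r powr p) + L * t"
    unfolding \<psi>_def by (simp add: algebra_simps)
  then have "exp (ln (1 + (r+t) powr p)) \<le> exp (ln (1 + r powr p) + L * t)"
    by (rule exp_mono)
  also have "exp (ln (1 + r powr p) + L * t) = exp (L * t) * (1 + r powr p)"
    unfolding exp_add by (simp add: add_pos_nonneg mult.commute)
  finally show ?thesis by (simp add: L_def add_pos_nonneg)
qed

lemma gc_const_nonneg:
  assumes p: "p > 1" and th: "\<theta> \<ge> 1"
  shows "gc_const p \<theta> \<ge> 0"
proof -
  have "1/p < 1" using p by simp
  then have "\<theta> - 1/p > 0" using th by linarith
  moreover have "1/p > 0" using p by simp
  ultimately show ?thesis using p th unfolding gc_const_def
    by (intro divide_nonneg_pos mult_nonneg_nonneg mult_pos_pos Gamma_real_pos) auto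
qed

lemma gc_density_nonneg:
  assumes p: "p > 1" and th: "\<theta> \<ge> 1"
  shows "gc_density p \<theta> y \<ge> 0"
  unfolding gc_density_def using gc_const_nonneg[OF p th] by simp

lemma gc_shift:
  fixes p \<theta> v w :: real
  assumes p: "p > 1" and th: "\<theta> \<ge> 1"
  shows "gc_density p \<theta> (v + w) \<le> exp (\<theta> * ((p - 1) powr ((p - 1) / p)) * \<bar>w\<bar>) * gc_density p \<theta> v"
proof -
  define L where "L = (p - 1) powr ((p - 1) / p)"
  define X where "X = 1 + \<bar>v\<bar> powr p"
  define Y where "Y = 1 + \<bar>v + w\<bar> powr p"
  have Xpos: "X > 0" and Ypos: "Y > 0" by (simp_all add: X_def Y_def add_pos_nonneg)
  have vw: "\<bar>v\<bar> \<le> \<bar>v + w\<bar> + \<bar>w\<bar>" by linarith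
  have "\<bar>v\<bar> powr p \<le> (\<bar>v + w\<bar> + \<bar>w\<bar>) powr p"
    by (rule powr_mono2) (use p vw in auto)
  also have "1 + (\<bar>v + w\<bar> + \<bar>w\<bar>) powr p \<le> exp (L * \<bar>w\<bar>) * Y"
    unfolding L_def Y_def by (rule core_growth) (use p in auto)
  finally have XY: "X \<le> exp (L * \<bar>w\<bar>) * Y" by (simp add: X_def)
  have "X powr \<theta> \<le> (exp (L * \<bar>w\<bar>) * Y) powr \<theta>"
    by (rule powr_mono2) (use th Xpos XY in auto)
  also have "\<dots> = exp (\<theta> * L * \<bar>w\<bar>) * Y powr \<theta>"
    using Ypos by (simp add: powr_mult exp_powr_real mult_ac)
  finally have XY2: "X powr \<theta> \<le> exp (\<theta> * L * \<bar>w\<bar>) * Y powr \<theta>" .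
  have "Y powr (-\<theta>) = 1 / Y powr \<theta>" by (simp add: powr_minus_divide)
  also have "\<dots> \<le> exp (\<theta> * L * \<bar>w\<bar>) / X powr \<theta>"
    using XY2 Xpos Ypos by (simp add: field_simps)
  also have "\<dots> = exp (\<theta> * L * \<bar>w\<bar>) * X powr (-\<theta>)" by (simp add: powr_minus_divide)
  finally have "Y powr (-\<theta>) \<le> exp (\<theta> * L * \<bar>w\<bar>) * X powr (-\<theta>)" .
  then have "gc_const p \<theta> * Y powr (-\<theta>) \<le> gc_const p \<theta> * (exp (\<theta> * L * \<bar>w\<bar>) * X powr (-\<theta>))"
    by (rule mult_left_mono) (rule gc_const_nonneg[OF p th])
  then show ?thesis by (simp add: gc_density_def X_def Y_def L_def mult_ac)
qed

lemma gc_scale: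
  fixes p \<theta> s s' u E :: real
  assumes p: "p > 1" and th: "\<theta> \<ge> 1" and s: "s > 0" and s': "s' > 0"
    and E1: "s' \<le> E * s" and E2: "(s / s') powr (p * \<theta> - 1) \<le> E"
  shows "(1 / s) * gc_density p \<theta> (u / s) \<le> E * ((1 / s') * gc_density p \<theta> (u / s'))"
proof -
  define X where "X = \<bar>u\<bar> powr p"
  have X0: "X \<ge> 0" by (simp add: X_def)
  define A where "A = 1 + X / s powr p"
  define A' where "A' = 1 + X / s' powr p"
  have hA: "\<bar>u / s\<bar> powr p = X / s powr p" using s by (simp add: X_def powr_divide abs_divide)
  have hA': "\<bar>u / s'\<bar> powr p = X / s' powr p" using s' by (simp add: X_def powr_divide abs_divide)
  have Apos: "A \<ge> 1" using X0 s by (simp add: A_def)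
  have A'pos: "A' \<ge> 1" using X0 s' by (simp add: A'_def)
  have key: "s' * A' powr \<theta> \<le> E * s * A powr \<theta>"
  proof (cases "s \<le> s'")
    case True
    have "s powr p \<le> s' powr p" by (rule powr_mono2) (use True s p in auto)
    then have "X / s' powr p \<le> X / s powr p"
      using s s' X0 by (intro divide_left_mono) auto
    then have "A' \<le> A" by (simp add: A_def A'_def)
    then have "A' powr \<theta> \<le> A powr \<theta>" by (intro powr_mono2) (use th A'pos in auto)
    then have "s' * A' powr \<theta> \<le> s' * A powr \<theta>" using s' by simp
    also have "\<dots> \<le> E * s * A powr \<theta>"
      using E1 Apos by (intro mult_right_mono) auto
    finally show ?thesis .
  next
    case False
    define q where "q = s / s'"
    have q1: "q \<ge> 1" using False s' by (simp add: q_def)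
    have qp: "q powr p \<ge> 1" using q1 p by (simp add: ge_one_powr_ge_zero)
    have "X / s' powr p = q powr p * (X / s powr p)"
      using s s' by (simp add: q_def powr_divide)
    then have "A' \<le> q powr p * A"
      using qp by (simp add: A_def A'_def algebra_simps)
    then have "A' powr \<theta> \<le> (q powr p * A) powr \<theta>" by (intro powr_mono2) (use th A'pos in auto)
    also have "\<dots> = q powr (p * \<theta>) * A powr \<theta>"
      using q1 Apos by (simp add: powr_mult powr_powr)
    also have "q powr (p * \<theta>) = q * q powr (p * \<theta> - 1)"
    proof -
      have "q * q powr (p * \<theta> - 1) = q powr 1 * q powr (p * \<theta> - 1)" using q1 by simp
      also have "\<dots> = q powr (1 + (p * \<theta> - 1))" by (rule powr_add[symmetric])
      finally show ?thesis by simp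
    qed
    finally have "s' * A' powr \<theta> \<le> s' * (q * q powr (p * \<theta> - 1) * A powr \<theta>)"
      using s' by simp
    also have "\<dots> = s * q powr (p * \<theta> - 1) * A powr \<theta>"
      using s' by (simp add: q_def)
    also have "\<dots> \<le> s * E * A powr \<theta>"
      using E2 s Apos by (intro mult_right_mono mult_left_mono) (auto simp: q_def)
    finally show ?thesis by (simp add: mult_ac)
  qed
  have Ap: "A powr \<theta> > 0" "A' powr \<theta> > 0" using Apos A'pos by auto
  have "(1 / s) * A powr (-\<theta>) \<le> E * ((1 / s') * A' powr (-\<theta>))"
    using key s s' Ap by (simp add: powr_minus_divide field_simps)
  then have "gc_const p \<theta> * ((1 / s) * A powr (-\<theta>)) \<le> gc_const p \<theta> * (E * ((1 / s') * A' powr (-\<theta>)))"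
    by (rule mult_left_mono) (rule gc_const_nonneg[OF p th])
  then show ?thesis
    unfolding gc_density_def hA hA' A_def[symmetric] A'_def[symmetric] by (simp add: mult_ac)
qed

lemma gc_density_measurable [measurable]:
  "gc_density p \<theta> \<in> borel_measurable borel"
  unfolding gc_density_def by measurable

lemma mech_emeasure:
  fixes a :: "real ^ 'n" and s :: real
  assumes s: "s > 0" and S: "S \<in> sets (borel :: (real ^ 'n) measure)"
    and p: "p > 1" and th: "\<theta> \<ge> 1"
  shows "emeasure (distr (gc_vector p \<theta> :: (real ^ 'n) measure) borel (\<lambda>z. a + s *\<^sub>R z)) S
    = (\<integral>\<^sup>+ y. ennreal (\<Prod>j\<in>UNIV. (1 / s) * gc_density p \<theta> ((y $ j - a $ j) / s)) * indicator S y \<partial>lborel)"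
proof -
  define T where "T = (\<lambda>z::real^'n. a + s *\<^sub>R z)"
  define D where "D = (\<lambda>z::real^'n. ennreal (\<Prod>j\<in>UNIV. gc_density p \<theta> (z $ j)))"
  have Dm [measurable]: "D \<in> borel_measurable lborel" unfolding D_def by measurable
  have Tm [measurable]: "T \<in> borel_measurable borel" unfolding T_def by measurable
  have Tm': "T \<in> measurable (gc_vector p \<theta>) borel"
    unfolding gc_vector_def by (simp add: measurable_cong_sets[OF sets_density refl])
  have pre: "T -` S \<in> sets lborel" using measurable_sets[OF Tm S] by simp
  have "emeasure (distr (gc_vector p \<theta>) borel T) S = emeasure (gc_vector p \<theta>) (T -` S \<inter> space (gc_vector p \<theta>))"
    by (rule emeasure_distr[OF Tm' S])
  also have "\<dots> = emeasure (gc_vector p \<theta>) (T -` S)" by (simp add: gc_vector_def)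
  also have "\<dots> = (\<integral>\<^sup>+ z. D z * indicator (T -` S) z \<partial>lborel)"
    unfolding gc_vector_def D_def[symmetric] using pre by (intro emeasure_density) auto
  finally have e1: "emeasure (distr (gc_vector p \<theta>) borel T) S = (\<integral>\<^sup>+ z. D z * indicator (T -` S) z \<partial>lborel)" .
  define c where "c = 1 / s"
  define t where "t = - c *\<^sub>R a"
  have c0: "c \<noteq> 0" using s by (simp add: c_def)
  define R where "R = (\<lambda>y::real^'n. t + c *\<^sub>R y)"
  have Rm [measurable]: "R \<in> borel_measurable lborel" unfolding R_def by measurable
  have LA: "lborel = density (distr lborel borel R) (\<lambda>_. ennreal (\<bar>c\<bar> ^ DIM(real^'n)))"
    unfolding R_def by (rule lborel_affine[OF c0])
  define F where "F = (\<lambda>z. D z * indicator (T -` S) z)"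
  have Fm [measurable]: "F \<in> borel_measurable borel" unfolding F_def using pre by measurable
  have "(\<integral>\<^sup>+ z. F z \<partial>lborel) = (\<integral>\<^sup>+ z. F z \<partial>(density (distr lborel borel R) (\<lambda>_. ennreal (\<bar>c\<bar> ^ DIM(real^'n)))))"
    using arg_cong[OF LA, of "\<lambda>M. integral\<^sup>N M F"] by simp
  also have "\<dots> = (\<integral>\<^sup>+ z. ennreal (\<bar>c\<bar> ^ DIM(real^'n)) * F z \<partial>(distr lborel borel R))"
    by (rule nn_integral_density) auto
  also have "\<dots> = (\<integral>\<^sup>+ y. ennreal (\<bar>c\<bar> ^ DIM(real^'n)) * F (R y) \<partial>lborel)"
    by (rule nn_integral_distr) auto
  also have "\<dots> = (\<integral>\<^sup>+ y. ennreal (\<Prod>j\<in>UNIV. (1 / s) * gc_density p \<theta> ((y $ j - a $ j) / s)) * indicator S y \<partial>lborel)"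
  proof (rule nn_integral_cong)
    fix y :: "real^'n"
    have TR: "T (R y) = y" using s by (simp add: T_def R_def t_def c_def algebra_simps)
    have ind: "indicator (T -` S) (R y) = (indicator S y :: ennreal)"
      using TR by (simp add: indicator_def)
    have Rj: "R y $ j = (y $ j - a $ j) / s" for j
      using s by (simp add: R_def t_def c_def field_simps)
    have nn: "(\<Prod>j\<in>UNIV. gc_density p \<theta> ((y $ j - a $ j) / s)) \<ge> 0"
      by (intro prod_nonneg gc_density_nonneg[OF p th])
    have "(\<Prod>j\<in>UNIV. (1 / s) * gc_density p \<theta> ((y $ j - a $ j) / s))
        = \<bar>c\<bar> ^ CARD('n) * (\<Prod>j\<in>UNIV. gc_density p \<theta> ((y $ j - a $ j) / s))"
    proof -
      have "(\<Prod>j\<in>UNIV. (1 / s) * gc_density p \<theta> ((y $ j - a $ j) / s))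
          = (\<Prod>j\<in>(UNIV::'n set). 1 / s) * (\<Prod>j\<in>UNIV. gc_density p \<theta> ((y $ j - a $ j) / s))"
        by (rule prod.distrib[of "\<lambda>_. 1 / s" "\<lambda>j. gc_density p \<theta> ((y $ j - a $ j) / s)"])
      also have "(\<Prod>j\<in>(UNIV::'n set). 1 / s) = \<bar>c\<bar> ^ CARD('n)" using s by (simp add: c_def)
      finally show ?thesis .
    qed
    then show "ennreal (\<bar>c\<bar> ^ DIM(real^'n)) * F (R y) = ennreal (\<Prod>j\<in>UNIV. (1 / s) * gc_density p \<theta> ((y $ j - a $ j) / s)) * indicator S y"
      using nn by (simp add: F_def D_def ind Rj ennreal_mult mult.assoc)
  qed
  finally show ?thesis using e1 by (simp add: F_def T_def)
qed

lemma lip_bound: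
  assumes "local_lip f \<Lambda> x \<le> ereal (Bx)" and "ereal (dist x x') \<le> \<Lambda>"
  shows "l1_norm (f x - f x') \<le> Bx * dist x x'"
proof (rule field_le_epsilon)
  fix e :: real assume e: "e > 0"
  define e' where "e' = e / (dist x x' + 1)"
  have e': "e' > 0" using e by (simp add: e'_def add_nonneg_pos)
  have "ereal Bx < ereal (Bx + e')" using e' by simp
  with assms(1) have "local_lip f \<Lambda> x < ereal (Bx + e')" by (rule le_less_trans)
  then obtain K where K: "\<forall>x'. ereal (dist x x') \<le> \<Lambda> \<longrightarrow> l1_norm (f x - f x') \<le> K * dist x x'"
    and Kl: "ereal K < ereal (Bx + e')"
    unfolding local_lip_def Inf_less_iff by auto
  have "l1_norm (f x - f x') \<le> K * dist x x'" using K assms(2) by blast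
  also have "\<dots> \<le> (Bx + e') * dist x x'" using Kl by (intro mult_right_mono) auto
  also have "\<dots> = Bx * dist x x' + e' * dist x x'" by (simp add: algebra_simps)
  also have "e' * dist x x' \<le> e"
  proof -
    have ne: "dist x x' + 1 > 0" using zero_le_dist[of x x'] by linarith
    have "e' * dist x x' \<le> e' * (dist x x' + 1)" using e' by (intro mult_left_mono) auto
    also have "e' * (dist x x' + 1) = e" unfolding e'_def using ne by simp
    finally show ?thesis .
  qed
  finally show "l1_norm (f x - f x') \<le> Bx * dist x x' + e" by simp
qed

lemma pointwise_bound:
  fixes a a' y :: "real ^ 'n"
  assumes p: "p > 1" and th: "\<theta> \<ge> 1" and s: "s > 0" and s': "s' > 0"
    and E1: "s' \<le> E * s" and E2: "(s / s') powr (p * \<theta> - 1) \<le> E"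
    and lip: "l1_norm (a - a') \<le> s * \<eta> * d"
  shows "(\<Prod>j\<in>UNIV. (1 / s) * gc_density p \<theta> ((y $ j - a $ j) / s))
     \<le> exp (\<theta> * (p - 1) powr ((p - 1) / p) * \<eta> * d) * E ^ CARD('n) *
        (\<Prod>j\<in>UNIV. (1 / s') * gc_density p \<theta> ((y $ j - a' $ j) / s'))"
proof -
  define L where "L = (p - 1) powr ((p - 1) / p)"
  have L0: "L \<ge> 0" by (simp add: L_def)
  define h where "h j = (1 / s') * gc_density p \<theta> ((y $ j - a' $ j) / s')" for j
  define k where "k j = exp (\<theta> * L * \<bar>a' $ j - a $ j\<bar> / s)" for j
  have step: "0 \<le> (1 / s) * gc_density p \<theta> ((y $ j - a $ j) / s) \<and>
      (1 / s) * gc_density p \<theta> ((y $ j - a $ j) / s) \<le> k j * (E * h j)" for j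
  proof
    show "0 \<le> (1 / s) * gc_density p \<theta> ((y $ j - a $ j) / s)"
      using s gc_density_nonneg[OF p th] by simp
    have eq: "(y $ j - a $ j) / s = (y $ j - a' $ j) / s + (a' $ j - a $ j) / s"
      using s by (simp add: field_simps)
    have "gc_density p \<theta> ((y $ j - a $ j) / s)
        \<le> exp (\<theta> * L * \<bar>(a' $ j - a $ j) / s\<bar>) * gc_density p \<theta> ((y $ j - a' $ j) / s)"
      unfolding eq L_def by (rule gc_shift[OF p th])
    also have "\<bar>(a' $ j - a $ j) / s\<bar> = \<bar>a' $ j - a $ j\<bar> / s" using s by simp
    finally have "(1 / s) * gc_density p \<theta> ((y $ j - a $ j) / s)
        \<le> (1 / s) * (k j * gc_density p \<theta> ((y $ j - a' $ j) / s))"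
      using s by (simp add: k_def mult_ac divide_right_mono)
    also have "\<dots> = k j * ((1 / s) * gc_density p \<theta> ((y $ j - a' $ j) / s))" by simp
    also have "\<dots> \<le> k j * (E * h j)"
      unfolding h_def by (intro mult_left_mono gc_scale[OF p th s s' E1 E2]) (simp add: k_def)
    finally show "(1 / s) * gc_density p \<theta> ((y $ j - a $ j) / s) \<le> k j * (E * h j)" .
  qed
  have "(\<Prod>j\<in>UNIV. (1 / s) * gc_density p \<theta> ((y $ j - a $ j) / s)) \<le> (\<Prod>j\<in>UNIV. k j * (E * h j))"
    by (rule prod_mono) (use step in blast)
  also have "\<dots> = (\<Prod>j\<in>UNIV. k j) * (E ^ CARD('n) * (\<Prod>j\<in>UNIV. h j))"
    by (simp add: prod.distrib)
  also have "(\<Prod>j\<in>UNIV. k j) = exp (\<Sum>j\<in>UNIV. \<theta> * L * \<bar>a' $ j - a $ j\<bar> / s)"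
    unfolding k_def by (simp add: exp_sum)
  also have "(\<Sum>j\<in>UNIV. \<theta> * L * \<bar>a' $ j - a $ j\<bar> / s) = \<theta> * L / s * l1_norm (a - a')"
    unfolding l1_norm_def by (simp add: sum_distrib_left abs_minus_commute)
  finally have *: "(\<Prod>j\<in>UNIV. 1 / s * gc_density p \<theta> ((y $ j - a $ j) / s))
      \<le> exp (\<theta> * L / s * l1_norm (a - a')) * (E ^ CARD('n) * prod h UNIV)" .
  have "\<theta> * L / s * l1_norm (a - a') \<le> \<theta> * L / s * (s * \<eta> * d)"
    using lip th L0 s by (intro mult_left_mono) auto
  also have "\<theta> * L / s * (s * \<eta> * d) = \<theta> * L * \<eta> * d" using s by simp
  finally have **: "\<theta> * L / s * l1_norm (a - a') \<le> \<theta> * L * \<eta> * d" .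
  have hn: "0 \<le> prod h UNIV" unfolding h_def using s' gc_density_nonneg[OF p th]
    by (intro prod_nonneg) simp
  have En: "0 \<le> E" using E2 by (meson order_trans powr_ge_zero)
  have "exp (\<theta> * L / s * l1_norm (a - a')) * (E ^ CARD('n) * prod h UNIV)
     \<le> exp (\<theta> * L * \<eta> * d) * (E ^ CARD('n) * prod h UNIV)"
    using ** hn En by (intro mult_right_mono) auto
  with * have "(\<Prod>j\<in>UNIV. (1 / s) * gc_density p \<theta> ((y $ j - a $ j) / s))
      \<le> exp (\<theta> * L * \<eta> * d) * (E ^ CARD('n) * (\<Prod>j\<in>UNIV. h j))" by simp
  then show ?thesis by (simp add: h_def L_def mult_ac)
qed

lemma key_emeasure:
  fixes f :: "'a::metric_space \<Rightarrow> real ^ 'n" and B :: "'a \<Rightarrow> real"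
  assumes g: "\<gamma> > 0" and et: "\<eta> > 0" and p: "p > 1" and th: "\<theta> \<ge> 1"
    and sm: "smooth_upper_bound (\<lambda>x x'. exp (\<gamma> * dist x x')) f \<Lambda> B"
    and dx: "ereal (dist x x') \<le> \<Lambda>" and Bx: "B x > 0" and Bx': "B x' > 0"
    and S: "S \<in> sets (borel :: (real ^ 'n) measure)"
  shows "emeasure (gc_mechanism f B \<eta> p \<theta> x) S \<le>
     ennreal (exp ((max (real CARD('n) * \<gamma>) (real CARD('n) * (p * \<theta> - 1) * \<gamma>)
               + (p - 1) powr ((p - 1) / p) * \<theta> * \<eta>) * dist x x'))
     * emeasure (gc_mechanism f B \<eta> p \<theta> x') S"
proof -
  define d where "d = dist x x'"
  have d0: "d \<ge> 0" by (simp add: d_def)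
  define s where "s = B x / \<eta>"
  define s' where "s' = B x' / \<eta>"
  have s: "s > 0" and s': "s' > 0" using Bx Bx' et by (simp_all add: s_def s'_def)
  define mx where "mx = max \<gamma> ((p * \<theta> - 1) * \<gamma>)"
  define E where "E = exp (mx * d)"
  have "p * 1 \<le> p * \<theta>" using th p by (intro mult_left_mono) auto
  then have pt: "p * \<theta> - 1 \<ge> 0" using p by linarith
  have lipx: "local_lip f \<Lambda> x \<le> ereal (B x)" using sm by (simp add: smooth_upper_bound_def)
  have lip0: "l1_norm (f x - f x') \<le> B x * d" unfolding d_def by (rule lip_bound[OF lipx dx])
  have lip: "l1_norm (f x - f x') \<le> s * \<eta> * d" using lip0 et by (simp add: s_def)
  have B1: "B x \<le> exp (\<gamma> * d) * B x'" using sm by (simp add: smooth_upper_bound_def d_def)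
  have "B x' \<le> exp (\<gamma> * dist x' x) * B x"
    using sm unfolding smooth_upper_bound_def by blast
  moreover have "dist x' x = d" unfolding d_def by (rule dist_commute)
  ultimately have B2: "B x' \<le> exp (\<gamma> * d) * B x" by simp
  have gE: "exp (\<gamma> * d) \<le> E" unfolding E_def mx_def
    using mult_right_mono[OF max.cobounded1[of \<gamma> "(p * \<theta> - 1) * \<gamma>"] d0] by simp
  have E1: "s' \<le> E * s"
  proof -
    have "s' \<le> exp (\<gamma> * d) * s" using B2 et by (simp add: s_def s'_def divide_right_mono)
    also have "\<dots> \<le> E * s" using gE s by (simp add: mult_right_mono)
    finally show ?thesis .
  qed
  have E2: "(s / s') powr (p * \<theta> - 1) \<le> E"
  proof -
    have "s / s' \<le> exp (\<gamma> * d)" using B1 Bx' et by (simp add: s_def s'_def divide_le_eq)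
    then have "(s / s') powr (p * \<theta> - 1) \<le> exp (\<gamma> * d) powr (p * \<theta> - 1)"
      using s s' pt by (intro powr_mono2) auto
    also have "\<dots> = exp ((p * \<theta> - 1) * \<gamma> * d)" by (simp add: exp_powr_real mult_ac)
    also have "\<dots> \<le> E" unfolding E_def mx_def
      using mult_right_mono[OF max.cobounded2[of "(p * \<theta> - 1) * \<gamma>" \<gamma>] d0] by (simp add: mult.assoc)
    finally show ?thesis .
  qed
  define P where "P y = (\<Prod>j\<in>UNIV. (1 / s) * gc_density p \<theta> ((y $ j - f x $ j) / s))" for y :: "real^'n"
  define P' where "P' y = (\<Prod>j\<in>UNIV. (1 / s') * gc_density p \<theta> ((y $ j - f x' $ j) / s'))" for y :: "real^'n"
  define \<epsilon> where "\<epsilon> = max (real CARD('n) * \<gamma>) (real CARD('n) * (p * \<theta> - 1) * \<gamma>)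
               + (p - 1) powr ((p - 1) / p) * \<theta> * \<eta>"
  define M where "M = max (real CARD('n) * \<gamma>) (real CARD('n) * (p * \<theta> - 1) * \<gamma>)"
  have Mmx: "real CARD('n) * mx = M"
    unfolding mx_def M_def max_mult_distrib_left by (simp add: mult.assoc)
  have EC: "E ^ CARD('n) = exp (real CARD('n) * (mx * d))"
    unfolding E_def by (rule exp_of_nat_mult[symmetric])
  have sumeq: "\<theta> * (p - 1) powr ((p - 1) / p) * \<eta> * d + real CARD('n) * (mx * d) = \<epsilon> * d"
  proof -
    have h: "real CARD('n) * (mx * d) = M * d" using Mmx by (simp only: mult.assoc[symmetric])
    show ?thesis unfolding h \<epsilon>_def M_def[symmetric] by (simp add: algebra_simps)
  qed
  have Eexp: "exp (\<theta> * (p - 1) powr ((p - 1) / p) * \<eta> * d) * E ^ CARD('n) = exp (\<epsilon> * d)"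
    unfolding EC exp_add[symmetric] sumeq ..
  have pw: "P y \<le> exp (\<epsilon> * d) * P' y" for y
  proof -
    have "P y \<le> exp (\<theta> * (p - 1) powr ((p - 1) / p) * \<eta> * d) * E ^ CARD('n) * P' y"
      unfolding P_def P'_def by (rule pointwise_bound[OF p th s s' E1 E2 lip])
    then show ?thesis unfolding Eexp .
  qed
  have P'0: "P' y \<ge> 0" for y unfolding P'_def using s' gc_density_nonneg[OF p th]
    by (intro prod_nonneg) simp
  have P'm [measurable]: "P' \<in> borel_measurable borel" unfolding P'_def by measurable
  have "emeasure (gc_mechanism f B \<eta> p \<theta> x) S = (\<integral>\<^sup>+ y. ennreal (P y) * indicator S y \<partial>lborel)"
    unfolding gc_mechanism_def P_def s_def[symmetric] by (rule mech_emeasure[OF s S p th])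
  also have "\<dots> \<le> (\<integral>\<^sup>+ y. ennreal (exp (\<epsilon> * d)) * (ennreal (P' y) * indicator S y) \<partial>lborel)"
  proof (rule nn_integral_mono)
    fix y
    have "ennreal (P y) \<le> ennreal (exp (\<epsilon> * d) * P' y)" by (rule ennreal_leI[OF pw])
    also have "\<dots> = ennreal (exp (\<epsilon> * d)) * ennreal (P' y)" using P'0 by (simp add: ennreal_mult)
    finally have le: "ennreal (P y) \<le> ennreal (exp (\<epsilon> * d)) * ennreal (P' y)" .
    show "ennreal (P y) * indicator S y \<le> ennreal (exp (\<epsilon> * d)) * (ennreal (P' y) * indicator S y)"
      unfolding mult.assoc[symmetric] by (rule mult_right_mono[OF le]) simp
  qed
  also have "\<dots> = ennreal (exp (\<epsilon> * d)) * (\<integral>\<^sup>+ y. ennreal (P' y) * indicator S y \<partial>lborel)"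
  proof (rule nn_integral_cmult)
    note [measurable] = S
    show "(\<lambda>y. ennreal (P' y) * indicator S y) \<in> borel_measurable lborel" by measurable
  qed
  also have "(\<integral>\<^sup>+ y. ennreal (P' y) * indicator S y \<partial>lborel) = emeasure (gc_mechanism f B \<eta> p \<theta> x') S"
    unfolding gc_mechanism_def P'_def s'_def[symmetric] by (rule mech_emeasure[OF s' S p th, symmetric])
  finally show ?thesis unfolding \<epsilon>_def[symmetric] d_def[symmetric] .
qed

theorem mainTheorem4:
  fixes f :: "'a::metric_space \<Rightarrow> real ^ 'n"
    and B :: "'a \<Rightarrow> real"
    and \<gamma> \<eta> p \<theta> :: real
    and \<Lambda> :: ereal
  assumes "\<gamma> > 0" and "\<eta> > 0" and "\<Lambda> > 0"
    and "p > 1" and "\<theta> \<ge> 1"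
    and "smooth_upper_bound (\<lambda>x x'. exp (\<gamma> * dist x x')) f \<Lambda> B"
  shows "GP (max (real CARD('n) * \<gamma>) (real CARD('n) * (p * \<theta> - 1) * \<gamma>)
               + (p - 1) powr ((p - 1) / p) * \<theta> * \<eta>)
            0 \<Lambda> (gc_mechanism f B \<eta> p \<theta>)"
proof -
  note g = assms(1) and et = assms(2) and p = assms(4) and th = assms(5) and sm = assms(6)
  define \<epsilon> where "\<epsilon> = max (real CARD('n) * \<gamma>) (real CARD('n) * (p * \<theta> - 1) * \<gamma>)
               + (p - 1) powr ((p - 1) / p) * \<theta> * \<eta>"
  have eps0: "\<epsilon> \<ge> 0"
  proof -
    have "0 \<le> real CARD('n) * \<gamma>" using g by simp
    also have "\<dots> \<le> max (real CARD('n) * \<gamma>) (real CARD('n) * (p * \<theta> - 1) * \<gamma>)" by simp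
    finally show ?thesis unfolding \<epsilon>_def using th et by (intro add_nonneg_nonneg) auto
  qed
  have B0: "B z \<ge> 0" for z using sm by (simp add: smooth_upper_bound_def)
  show ?thesis
    unfolding GP_def \<epsilon>_def[symmetric]
  proof (intro ballI allI impI)
    fix S :: "(real ^ 'n) set" and x x' :: 'a
    assume S: "S \<in> sets borel" and dx: "ereal (dist x x') \<le> \<Lambda>"
    let ?M = "gc_mechanism f B \<eta> p \<theta>"
    have exp1: "exp (\<epsilon> * dist x x') \<ge> 1" using eps0 by simp
    show "measure (?M x) S \<le> exp (\<epsilon> * dist x x') * measure (?M x') S + 0"
    proof (cases "B x = 0 \<or> B x' = 0")
      case True
      have Bxx'1: "B x \<le> exp (\<gamma> * dist x x') * B x'"
        using sm unfolding smooth_upper_bound_def by blast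
      have Bxx'2: "B x' \<le> exp (\<gamma> * dist x x') * B x"
        using sm unfolding smooth_upper_bound_def dist_commute[of x x'] by blast
      note Bxx' = Bxx'1 Bxx'2
      have disj: "B x = 0 \<or> B x' = 0" using True .
      have bothc: "B x = 0 \<and> B x' = 0"
      proof (cases "B x = 0")
        case True
        have "B x' \<le> 0" using Bxx'2 unfolding True mult_zero_right .
        then have "B x' = 0" using B0[of x'] by (rule antisym)
        then show ?thesis using True by blast
      next
        case False
        then have h: "B x' = 0" using disj by blast
        have "B x \<le> 0" using Bxx'1 unfolding h mult_zero_right .
        then have "B x = 0" using B0[of x] by (rule antisym)
        then show ?thesis using h by blast
      qed
      have both: "B x = 0" "B x' = 0" using bothc by simp_all
      have lipx: "local_lip f \<Lambda> x \<le> ereal (B x)" using sm unfolding smooth_upper_bound_def by blast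
      have "l1_norm (f x - f x') \<le> B x * dist x x'" by (rule lip_bound[OF lipx dx])
      then have le: "(\<Sum>j\<in>UNIV. \<bar>(f x - f x') $ j\<bar>) \<le> 0" unfolding l1_norm_def both(1) by simp
      have s0: "(\<Sum>j\<in>UNIV. \<bar>(f x - f x') $ j\<bar>) = 0"
        by (intro antisym[OF le] sum_nonneg) simp
      have "\<forall>j\<in>UNIV. \<bar>(f x - f x') $ j\<bar> = 0"
        using s0 by (subst (asm) sum_nonneg_eq_0_iff) auto
      then have feq: "f x = f x'" by (simp add: vec_eq_iff)
      have Meq: "?M x = ?M x'" by (simp only: gc_mechanism_def both feq)
      have m0: "0 \<le> measure (?M x') S" by (rule measure_nonneg)
      have "measure (?M x') S \<le> exp (\<epsilon> * dist x x') * measure (?M x') S"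
        using mult_right_mono[OF exp1 m0] by simp
      then show ?thesis unfolding Meq by (simp only: add_0_right)
    next
      case False
      then have Bx: "B x > 0" and Bx': "B x' > 0" using B0[of x] B0[of x'] by auto
      have dx': "ereal (dist x' x) \<le> \<Lambda>" using dx by (simp add: dist_commute)
      have k1: "emeasure (?M x) S \<le> ennreal (exp (\<epsilon> * dist x x')) * emeasure (?M x') S"
        unfolding \<epsilon>_def by (rule key_emeasure[OF g et p th sm dx Bx Bx' S])
      have k2: "emeasure (?M x') S \<le> ennreal (exp (\<epsilon> * dist x x')) * emeasure (?M x) S"
        using key_emeasure[OF g et p th sm dx' Bx' Bx S] unfolding \<epsilon>_def by (simp add: dist_commute)
      show ?thesis
      proof (cases "emeasure (?M x') S = \<infinity>")
        case True
        have "emeasure (?M x) S = \<infinity>"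
        proof (rule ccontr)
          assume "emeasure (?M x) S \<noteq> \<infinity>"
          then have "ennreal (exp (\<epsilon> * dist x x')) * emeasure (?M x) S < \<infinity>"
            by (simp add: ennreal_mult_less_top less_top)
          with k2 True show False by simp
        qed
        then show ?thesis using True by (simp add: measure_def)
      next
        case False
        then have fin: "ennreal (exp (\<epsilon> * dist x x')) * emeasure (?M x') S < \<top>"
          by (simp add: ennreal_mult_less_top less_top)
        have "measure (?M x) S = enn2real (emeasure (?M x) S)" by (simp add: measure_def)
        also have "\<dots> \<le> enn2real (ennreal (exp (\<epsilon> * dist x x')) * emeasure (?M x') S)"
          by (rule enn2real_mono[OF k1 fin])
        also have "\<dots> = exp (\<epsilon> * dist x x') * measure (?M x') S"
          by (simp add: enn2real_mult measure_def)
        finally show ?thesis by simp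
      qed
    qed
  qed
qed


end
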